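(* Let $m\neq0$ and $r$ be real numbers. For all integers $n,k\ge0$, $$L_{m,r}(n,k)=\frac{1}{m^k\,k!}\sum_{j=0}^{k}\binom{k}{j}(-1)^{k-j}\prod_{i=0}^{n-1}(2r+jm+im),$$ and for all integers $n\ge k\ge1$, $$L_{m,r}(n,k)=\sum_{j=k}^{n}L_{m,r}(j-1,k-1)\prod_{i=j}^{n-1}(2r+km+im).$$
   Context: For real $m,r$, let $w_{m,r}(n,k)$ and $W_{m,r}(n,k)$ be the $r$-Whitney numbers of the first and second kind, defined by the polynomial identities $\prod_{j=0}^{n-1}(x-r-jm)=\sum_{k=0}^n w_{m,r}(n,k)x^k$ and $x^n=\sum_{k=0}^n W_{m,r}(n,k)\prod_{j=0}^{k-1}(x-r-jm)$ (both vanishing for $k>n$ or $k<0$; empty products equal $1$). The $r$-Whitney-Lah numbers are $L_{m,r}(n,k)=\sum_{j=k}^{n}(-1)^{n-j}w_{m,r}(n,j)W_{m,r}(j,k)$, with $L_{m,r}(n,k)=0$ for $n<k$ or $k<0$. *)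

theory Defs
  imports "HOL-Analysis.Analysis" "HOL-Computational_Algebra.Polynomial"
begin

definition gfall :: "real \<Rightarrow> real \<Rightarrow> nat \<Rightarrow> real poly" where
  "gfall m r n = (\<Prod>j<n. [:- r - real j * m, 1:])"

definition whitney1 :: "real \<Rightarrow> real \<Rightarrow> nat \<Rightarrow> nat \<Rightarrow> real" where
  "whitney1 m r n k = coeff (gfall m r n) k"

definition whitney2 :: "real \<Rightarrow> real \<Rightarrow> nat \<Rightarrow> nat \<Rightarrow> real" where
  "whitney2 m r n = (THE c. monom 1 n = (\<Sum>k\<le>n. smult (c k) (gfall m r k))
                              \<and> (\<forall>k>n. c k = 0))"

definition whitney_lah :: "real \<Rightarrow> real \<Rightarrow> nat \<Rightarrow> nat \<Rightarrow> real" where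
  "whitney_lah m r n k = (if n < k then 0 else
     (\<Sum>j=k..n. (-1) ^ (n - j) * whitney1 m r n j * whitney2 m r j k))"

end

theory Submission
  imports Defs
begin

definition G :: "real \<Rightarrow> real \<Rightarrow> nat \<Rightarrow> real \<Rightarrow> real" where
  "G m r k x = (\<Prod>j<k. x - r - real j * m)"

lemma poly_gfall: "poly (gfall m r k) x = G m r k x"
  by (simp add: gfall_def G_def poly_prod algebra_simps)

lemma G_Suc: "G m r (Suc k) x = G m r k x * (x - r - real k * m)"
  by (simp add: G_def)

lemma uniq:
  assumes m: "m \<noteq> 0" and h: "\<And>x. (\<Sum>k\<le>N. e k * G m r k x) = 0"
  shows "k \<le> N \<Longrightarrow> e k = 0"
proof (induction k rule: less_induct)
  case (less k)
  have "(\<Sum>i\<le>N. e i * G m r i (r + real k * m)) = 0" by (rule h)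
  moreover have "(\<Sum>i\<le>N. e i * G m r i (r + real k * m)) = e k * G m r k (r + real k * m)"
  proof (rule sum.remove[where x=k, THEN trans])
    show "finite {..N}" by simp
    show "k \<in> {..N}" using less by simp
    have "\<forall>i\<in>{..N} - {k}. e i * G m r i (r + real k * m) = 0"
    proof
      fix i assume i: "i \<in> {..N} - {k}"
      show "e i * G m r i (r + real k * m) = 0"
      proof (cases "i < k")
        case True then show ?thesis using less i by simp
      next
        case False
        then have "k \<in> {..<i}" using i by auto
        then have "G m r i (r + real k * m) = 0" unfolding G_def
          by (intro prod_zero) auto
        then show ?thesis by simp
      qed
    qed
    then have "(\<Sum>i\<in>{..N} - {k}. e i * G m r i (r + real k * m)) = 0" by (rule sum.neutral)
    then show "e k * G m r k (r + real k * m) + (\<Sum>i\<in>{..N} - {k}. e i * G m r i (r + real k * m)) =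
      e k * G m r k (r + real k * m)" by simp
  qed
  moreover have "G m r k (r + real k * m) \<noteq> 0" unfolding G_def
    using m by (auto simp: algebra_simps)
  ultimately show ?case by simp
qed

fun Wr :: "real \<Rightarrow> real \<Rightarrow> nat \<Rightarrow> nat \<Rightarrow> real" where
  "Wr m r 0 k = (if k = 0 then 1 else 0)"
| "Wr m r (Suc n) k = (if k = 0 then 0 else Wr m r n (k - 1)) + (r + real k * m) * Wr m r n k"

lemma Wr_zero: "n < k \<Longrightarrow> Wr m r n k = 0"
  by (induction n arbitrary: k) auto

lemma shift_sum:
  fixes f :: "nat \<Rightarrow> real"
  shows "(\<Sum>k\<le>Suc n. (if k = 0 then 0 else f (k - 1)) * g k) = (\<Sum>k\<le>n. f k * g (Suc k))"
  by (subst sum.atMost_Suc_shift) simp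

lemma Wr_eval: "x ^ n = (\<Sum>k\<le>n. Wr m r n k * G m r k x)"
proof (induction n)
  case 0 then show ?case by (simp add: G_def)
next
  case (Suc n)
  have "x ^ Suc n = (\<Sum>k\<le>n. Wr m r n k * (x * G m r k x))"
    by (simp add: Suc sum_distrib_left algebra_simps)
  also have "\<dots> = (\<Sum>k\<le>n. Wr m r n k * G m r (Suc k) x) + (\<Sum>k\<le>n. (r + real k * m) * Wr m r n k * G m r k x)"
    by (simp add: G_Suc sum.distrib[symmetric] algebra_simps)
  also have "(\<Sum>k\<le>n. (r + real k * m) * Wr m r n k * G m r k x) = (\<Sum>k\<le>Suc n. (r + real k * m) * Wr m r n k * G m r k x)"
    by (simp add: Wr_zero)
  also have "(\<Sum>k\<le>n. Wr m r n k * G m r (Suc k) x) = (\<Sum>k\<le>Suc n. (if k = 0 then 0 else Wr m r n (k - 1)) * G m r k x)"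
    by (rule shift_sum[symmetric])
  finally show ?case by (simp add: sum.distrib[symmetric] algebra_simps)
qed

lemma whitney2_eq:
  assumes m: "m \<noteq> 0"
  shows "whitney2 m r n = Wr m r n"
  unfolding whitney2_def
proof (rule the_equality)
  show "monom 1 n = (\<Sum>k\<le>n. smult (Wr m r n k) (gfall m r k)) \<and> (\<forall>k>n. Wr m r n k = 0)"
    by (auto simp: Wr_zero poly_eq_poly_eq_iff[symmetric] poly_sum poly_gfall poly_monom Wr_eval[symmetric] fun_eq_iff)
next
  fix c assume c: "monom 1 n = (\<Sum>k\<le>n. smult (c k) (gfall m r k)) \<and> (\<forall>k>n. c k = 0)"
  have "\<And>x. (\<Sum>k\<le>n. (c k - Wr m r n k) * G m r k x) = 0"
  proof -
    fix x
    have "x ^ n = (\<Sum>k\<le>n. c k * G m r k x)"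
      using arg_cong[OF conjunct1[OF c], of "\<lambda>p. poly p x"] by (simp add: poly_sum poly_gfall poly_monom)
    then show "(\<Sum>k\<le>n. (c k - Wr m r n k) * G m r k x) = 0"
      using Wr_eval[of x n m r] by (simp add: algebra_simps sum_subtractf)
  qed
  from uniq[OF m this] c show "c = Wr m r n"
    by (simp add: fun_eq_iff) (metis Wr_zero not_le)
qed


lemma degree_gfall: "degree (gfall m r n) \<le> n"
proof -
  have "degree (gfall m r n) \<le> (\<Sum>j<n. degree [:- r - real j * m, 1:])"
    unfolding gfall_def using degree_prod_sum_le[of "{..<n}" "\<lambda>j. [:- r - real j * m, 1:]"] by (simp add: o_def)
  then show ?thesis by simp
qed

lemma poly_sum_le:
  fixes p :: "real poly"
  assumes "degree p \<le> n"
  shows "poly p y = (\<Sum>j\<le>n. coeff p j * y ^ j)"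
  unfolding poly_altdef
  by (rule sum.mono_neutral_left) (use assms in \<open>auto simp: coeff_eq_0\<close>)

lemma w1_sum: "(\<Sum>j\<le>n. (-1) ^ (n - j) * whitney1 m r n j * x ^ j) = (\<Prod>j<n. x + r + real j * m)"
proof -
  have "(\<Sum>j\<le>n. (-1) ^ (n - j) * whitney1 m r n j * x ^ j) = (-1) ^ n * (\<Sum>j\<le>n. coeff (gfall m r n) j * (-x) ^ j)"
    unfolding whitney1_def sum_distrib_left
  proof (rule sum.cong)
    fix j assume "j \<in> {..n}"
    then have "(-1::real) ^ n = (-1) ^ (n - j) * (-1) ^ j" by (simp add: power_add[symmetric])
    then show "(-1) ^ (n - j) * coeff (gfall m r n) j * x ^ j = (-1) ^ n * (coeff (gfall m r n) j * (- x) ^ j)"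
      by (simp add: power_minus[of x])
  qed simp
  also have "\<dots> = (-1) ^ n * poly (gfall m r n) (-x)"
    using poly_sum_le[OF degree_gfall] by simp
  also have "\<dots> = (\<Prod>j<n. (-1::real)) * (\<Prod>j<n. (- x - r - real j * m))"
    by (simp add: poly_gfall G_def)
  also have "\<dots> = (\<Prod>j<n. (-1) * (- x - r - real j * m))"
    by (rule prod.distrib[symmetric])
  also have "\<dots> = (\<Prod>j<n. x + r + real j * m)" by (simp add: algebra_simps)
  finally show ?thesis .
qed

lemma L_eval:
  assumes m: "m \<noteq> 0"
  shows "(\<Prod>j<n. x + r + real j * m) = (\<Sum>k\<le>n. whitney_lah m r n k * G m r k x)"
proof -
  have L: "whitney_lah m r n k = (\<Sum>j\<le>n. (-1) ^ (n - j) * whitney1 m r n j * Wr m r j k)" if "k \<le> n" for k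
    unfolding whitney_lah_def whitney2_eq[OF m] using that
    by (simp, intro sum.mono_neutral_left) (auto simp: Wr_zero)
  have "(\<Sum>k\<le>n. whitney_lah m r n k * G m r k x) =
     (\<Sum>k\<le>n. \<Sum>j\<le>n. (-1) ^ (n - j) * whitney1 m r n j * (Wr m r j k * G m r k x))"
    by (simp add: L sum_distrib_right mult.assoc)
  also have "\<dots> = (\<Sum>j\<le>n. (-1) ^ (n - j) * whitney1 m r n j * (\<Sum>k\<le>n. Wr m r j k * G m r k x))"
    by (subst sum.swap) (simp add: sum_distrib_left)
  also have "\<dots> = (\<Sum>j\<le>n. (-1) ^ (n - j) * whitney1 m r n j * x ^ j)"
  proof (rule sum.cong)
    fix j assume j: "j \<in> {..n}"
    have "(\<Sum>k\<le>n. Wr m r j k * G m r k x) = (\<Sum>k\<le>j. Wr m r j k * G m r k x)"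
      by (rule sum.mono_neutral_right) (use j in \<open>auto simp: Wr_zero\<close>)
    then show "(-1) ^ (n - j) * whitney1 m r n j * (\<Sum>k\<le>n. Wr m r j k * G m r k x) =
      (-1) ^ (n - j) * whitney1 m r n j * x ^ j" by (simp add: Wr_eval[symmetric])
  qed simp
  finally show ?thesis by (simp add: w1_sum)
qed

fun Rr :: "real \<Rightarrow> real \<Rightarrow> nat \<Rightarrow> nat \<Rightarrow> real" where
  "Rr m r 0 k = (if k = 0 then 1 else 0)"
| "Rr m r (Suc n) k = (if k = 0 then 0 else Rr m r n (k - 1)) + (2 * r + real k * m + real n * m) * Rr m r n k"

lemma Rr_zero: "n < k \<Longrightarrow> Rr m r n k = 0"
  by (induction n arbitrary: k) auto

lemma Rr_diag: "Rr m r n n = 1"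
  by (induction n) (auto simp: Rr_zero)

lemma Rr_eval: "(\<Prod>j<n. x + r + real j * m) = (\<Sum>k\<le>n. Rr m r n k * G m r k x)"
proof (induction n)
  case 0 then show ?case by (simp add: G_def)
next
  case (Suc n)
  have "(\<Prod>j<Suc n. x + r + real j * m) = (\<Prod>j<n. x + r + real j * m) * (x + r + real n * m)"
    by simp
  also have "\<dots> = (\<Sum>k\<le>n. Rr m r n k * G m r k x) * (x + r + real n * m)"
    by (simp only: Suc)
  also have "\<dots> = (\<Sum>k\<le>n. Rr m r n k * (G m r k x * (x + r + real n * m)))"
    by (simp add: sum_distrib_right mult.assoc)
  also have "\<dots> = (\<Sum>k\<le>n. Rr m r n k * G m r (Suc k) x) + (\<Sum>k\<le>n. (2 * r + real k * m + real n * m) * Rr m r n k * G m r k x)"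
    by (simp add: G_Suc sum.distrib[symmetric] algebra_simps)
  also have "(\<Sum>k\<le>n. (2 * r + real k * m + real n * m) * Rr m r n k * G m r k x) = (\<Sum>k\<le>Suc n. (2 * r + real k * m + real n * m) * Rr m r n k * G m r k x)"
    by (simp add: Rr_zero)
  also have "(\<Sum>k\<le>n. Rr m r n k * G m r (Suc k) x) = (\<Sum>k\<le>Suc n. (if k = 0 then 0 else Rr m r n (k - 1)) * G m r k x)"
    by (rule shift_sum[symmetric])
  finally show ?case by (simp add: sum.distrib[symmetric] algebra_simps)
qed

lemma L_Rr:
  assumes m: "m \<noteq> 0"
  shows "whitney_lah m r n k = Rr m r n k"
proof (cases "k \<le> n")
  case True
  have "\<And>x. (\<Sum>k\<le>n. (whitney_lah m r n k - Rr m r n k) * G m r k x) = 0"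
    using L_eval[OF m] Rr_eval by (simp add: algebra_simps sum_subtractf)
  from uniq[OF m this True] show ?thesis by simp
next
  case False then show ?thesis by (simp add: whitney_lah_def Rr_zero)
qed


definition P :: "real \<Rightarrow> real \<Rightarrow> nat \<Rightarrow> nat \<Rightarrow> real" where
  "P m r n j = (\<Prod>i<n. 2 * r + real j * m + real i * m)"

definition D :: "real \<Rightarrow> real \<Rightarrow> nat \<Rightarrow> nat \<Rightarrow> real" where
  "D m r n k = (\<Sum>j\<le>k. real (k choose j) * (-1) ^ (k - j) * P m r n j)"

lemma D0: "D m r 0 k = (if k = 0 then 1 else 0)"
proof -
  have "((1::real) + (-1)) ^ k = (\<Sum>j\<le>k. real (k choose j) * 1 ^ j * (-1) ^ (k - j))"
    by (rule binomial_ring)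
  then show ?thesis by (auto simp: D_def P_def power_0_left)
qed

lemma aux:
  fixes d C1 K C0 s Pp c m :: real
  assumes "d * C1 = K * C0"
  shows "C1 * (-s) * (Pp * (c - d * m)) = c * (C1 * (-s) * Pp) + m * K * (C0 * s * Pp)"
proof -
  have "C1 * (-s) * (Pp * (c - d * m)) = c * (C1 * (-s) * Pp) + m * s * Pp * (d * C1)"
    by (simp add: algebra_simps)
  then show ?thesis using assms by (simp add: algebra_simps)
qed

lemma D_step: "D m r (Suc n) (Suc k) =
   (2 * r + real (Suc k) * m + real n * m) * D m r n (Suc k) + m * real (Suc k) * D m r n k"
proof -
  define c where "c = 2 * r + real (Suc k) * m + real n * m"
  have e: "real (Suc k choose j) * (-1) ^ (Suc k - j) * (P m r n j * (2 * r + real j * m + real n * m))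
      = c * (real (Suc k choose j) * (-1) ^ (Suc k - j) * P m r n j)
        + m * real (Suc k) * (real (k choose j) * (-1) ^ (k - j) * P m r n j)"
    if j: "j \<le> Suc k" for j
  proof (cases "j = Suc k")
    case True then show ?thesis by (simp add: c_def)
  next
    case False
    then have jk: "j \<le> k" using j by simp
    have ab: "real (Suc k - j) * real (Suc k choose j) = real (Suc k) * real (k choose j)"
      using binomial_absorb_comp[of "Suc k" j] by (metis diff_Suc_1 of_nat_mult)
    have sg: "(-1::real) ^ (Suc k - j) = - ((-1) ^ (k - j))" using jk by (simp add: Suc_diff_le)
    have cc: "2 * r + real j * m + real n * m = c - real (Suc k - j) * m"
      using jk by (simp add: c_def of_nat_diff algebra_simps)
    show ?thesis unfolding cc sg
      by (rule aux[OF ab])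
  qed
  have "D m r (Suc n) (Suc k) = (\<Sum>j\<le>Suc k. real (Suc k choose j) * (-1) ^ (Suc k - j) * (P m r n j * (2 * r + real j * m + real n * m)))"
    by (simp add: D_def P_def)
  also have "\<dots> = (\<Sum>j\<le>Suc k. c * (real (Suc k choose j) * (-1) ^ (Suc k - j) * P m r n j)
        + m * real (Suc k) * (real (k choose j) * (-1) ^ (k - j) * P m r n j))"
    by (rule sum.cong) (auto simp: e)
  also have "\<dots> = c * D m r n (Suc k) + m * real (Suc k) * (\<Sum>j\<le>Suc k. real (k choose j) * (-1) ^ (k - j) * P m r n j)"
    by (simp only: sum.distrib D_def sum_distrib_left)
  also have "(\<Sum>j\<le>Suc k. real (k choose j) * (-1) ^ (k - j) * P m r n j) = D m r n k"
    by (simp add: D_def)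
  finally show ?thesis by (simp add: c_def)
qed

lemma D_Rr: "D m r n k = m ^ k * fact k * Rr m r n k"
proof (induction n arbitrary: k)
  case 0 then show ?case by (simp add: D0)
next
  case (Suc n)
  show ?case
  proof (cases k)
    case 0 then show ?thesis using Suc.IH[of 0] by (simp add: D_def P_def)
  next
    case (Suc k')
    then show ?thesis using Suc.IH
      by (simp add: D_step algebra_simps)
  qed
qed

lemma Rr_rec:
  assumes "1 \<le> k" "k \<le> n"
  shows "Rr m r n k = (\<Sum>j=k..n. Rr m r (j - 1) (k - 1) * (\<Prod>i=j..<n. 2 * r + real k * m + real i * m))"
  using assms(2)
proof (induction n rule: dec_induct)
  case base
  then show ?case using assms(1) by (simp add: Rr_diag)
next
  case (step n)
  have "(\<Sum>j=k..Suc n. Rr m r (j - 1) (k - 1) * (\<Prod>i=j..<Suc n. 2 * r + real k * m + real i * m))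
     = (\<Sum>j=k..n. Rr m r (j - 1) (k - 1) * (\<Prod>i=j..<n. 2 * r + real k * m + real i * m)) * (2 * r + real k * m + real n * m)
       + Rr m r n (k - 1)"
    using step(1) by (simp add: sum_distrib_right mult.assoc)
  also have "\<dots> = Rr m r (Suc n) k" using step assms(1)
    by (cases k) (auto simp: algebra_simps)
  finally show ?case ..
qed


theorem mainTheorem12:
  fixes m r :: real
  assumes "m \<noteq> 0"
  shows "(\<forall>n k. whitney_lah m r n k =
            1 / (m ^ k * fact k) *
            (\<Sum>j=0..k. real (k choose j) * (-1) ^ (k - j) *
               (\<Prod>i=0..<n. 2 * r + real j * m + real i * m)))
       \<and> (\<forall>n k. 1 \<le> k \<and> k \<le> n \<longrightarrow>
            whitney_lah m r n k =
            (\<Sum>j=k..n. whitney_lah m r (j - 1) (k - 1) *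
               (\<Prod>i=j..<n. 2 * r + real k * m + real i * m)))"
proof (intro conjI allI impI)
  fix n k
  have "(\<Sum>j=0..k. real (k choose j) * (-1) ^ (k - j) *
               (\<Prod>i=0..<n. 2 * r + real j * m + real i * m)) = D m r n k"
    by (simp add: D_def P_def atLeast0AtMost atLeast0LessThan)
  then show "whitney_lah m r n k =
            1 / (m ^ k * fact k) *
            (\<Sum>j=0..k. real (k choose j) * (-1) ^ (k - j) *
               (\<Prod>i=0..<n. 2 * r + real j * m + real i * m))"
    using assms by (simp add: D_Rr L_Rr)
next
  fix n k :: nat
  assume "1 \<le> k \<and> k \<le> n"
  then show "whitney_lah m r n k =
            (\<Sum>j=k..n. whitney_lah m r (j - 1) (k - 1) *
               (\<Prod>i=j..<n. 2 * r + real k * m + real i * m))"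
    using assms by (simp add: L_Rr Rr_rec)
qed

end
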